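(* Let $(N,\langle\cdot,\cdot\rangle,\varphi)$ be a modified $H$-type group (see context), with $m=\dim\mathfrak v$. The Ricci operator $\mathrm{Rc}$ preserves the splitting $\mathfrak n=\mathfrak z\oplus\mathfrak v$, and $$\mathrm{Rc}|_{\mathfrak v}=-\tfrac{\xi}{2}\,\mathrm{Id}_{\mathfrak v},\qquad \mathrm{Rc}|_{\mathfrak z}=\tfrac m4\,\mathrm{Id}^\dagger_\varphi .$$
   Context: Let $N$ be a 2-step nilpotent real Lie group with Lie algebra $\mathfrak n$, Lie bracket $[\cdot,\cdot]$ and center $\mathfrak z$, endowed with a left-invariant pseudo-Riemannian metric $\langle\cdot,\cdot\rangle$ (identified with an inner product on $\mathfrak n$) for which $\mathfrak z$ is nondegenerate. Put $\mathfrak v=\mathfrak z^\perp$. For $z\in\mathfrak z$ define $j(z)\in\mathrm{End}(\mathfrak v)$ by $\langle [x,y],z\rangle=\langle y,j(z)x\rangle$ for all $x,y\in\mathfrak v$. Given a quadratic form $\varphi$ on $\mathfrak z$, $(N,\langle\cdot,\cdot\rangle,\varphi)$ is a modified $H$-type group if $j(z)^2=-\varphi(z)\,\mathrm{Id}_{\mathfrak v}$ for all $z\in\mathfrak z$. $\langle\cdot,\cdot\rangle_\varphi$ is the polarization of $\varphi$. With $\{z_1,\dots,z_p\}$ a pseudo-orthonormal basis of $\mathfrak z$, $\xi=\sum_{k}\langle z_k,z_k\rangle\varphi(z_k)$. The Ricci operator $\mathrm{Rc}:\mathfrak n\to\mathfrak n$ is defined by $\langle \mathrm{Rc}\,x,y\rangle=\mathrm{Ric}(x,y)$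 for all $x,y\in\mathfrak n$. The operator $\mathrm{Id}^\dagger_\varphi:\mathfrak z\to\mathfrak z$ is defined by $\langle \mathrm{Id}^\dagger_\varphi z,z'\rangle=\langle z,z'\rangle_\varphi$ for all $z,z'\in\mathfrak z$. *)

theory Defs
  imports "HOL-Analysis.Analysis"
begin

text \<open>The Lie algebra n is modelled by a finite-dimensional real vector space 'a
(of class euclidean_space; its Euclidean structure is used only to define the trace).\<close>

definition two_step_nilpotent_lie :: "('a::euclidean_space \<Rightarrow> 'a \<Rightarrow> 'a) \<Rightarrow> bool" where
  "two_step_nilpotent_lie br \<longleftrightarrow>
     bilinear br \<and> (\<forall>x y. br x y = - br y x) \<and>
     (\<forall>x y w. br x (br y w) + br y (br w x) + br w (br x y) = 0) \<and>
     (\<forall>x y w. br (br x y) w = 0) \<and> (\<exists>x y. br x y \<noteq> 0)"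

definition inner_prod :: "('a::euclidean_space \<Rightarrow> 'a \<Rightarrow> real) \<Rightarrow> bool" where
  "inner_prod g \<longleftrightarrow> bilinear g \<and> (\<forall>x y. g x y = g y x) \<and>
     (\<forall>x. (\<forall>y. g x y = 0) \<longrightarrow> x = 0)"

definition center :: "('a::euclidean_space \<Rightarrow> 'a \<Rightarrow> 'a) \<Rightarrow> 'a set" where
  "center br = {x. \<forall>y. br x y = 0}"

definition orth_compl :: "('a \<Rightarrow> 'a \<Rightarrow> real) \<Rightarrow> 'a set \<Rightarrow> 'a set" where
  "orth_compl g S = {x. \<forall>s\<in>S. g x s = 0}"

definition nondegenerate_on :: "('a::euclidean_space \<Rightarrow> 'a \<Rightarrow> real) \<Rightarrow> 'a set \<Rightarrow> bool" where
  "nondegenerate_on g S \<longleftrightarrow> (\<forall>x\<in>S. (\<forall>y\<in>S. g x y = 0) \<longrightarrow> x = 0)"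

definition jmap :: "('a::euclidean_space \<Rightarrow> 'a \<Rightarrow> 'a) \<Rightarrow> ('a \<Rightarrow> 'a \<Rightarrow> real) \<Rightarrow> 'a \<Rightarrow> 'a \<Rightarrow> 'a" where
  "jmap br g z x = (THE w. w \<in> orth_compl g (center br) \<and>
      (\<forall>y\<in>orth_compl g (center br). g (br x y) z = g y w))"

definition quadratic_form_on :: "'a::euclidean_space set \<Rightarrow> ('a \<Rightarrow> real) \<Rightarrow> bool" where
  "quadratic_form_on S \<phi> \<longleftrightarrow> (\<exists>B. bilinear B \<and> (\<forall>x y. B x y = B y x) \<and> (\<forall>z\<in>S. \<phi> z = B z z))"

definition modified_H_type :: "('a::euclidean_space \<Rightarrow> 'a \<Rightarrow> 'a) \<Rightarrow> ('a \<Rightarrow> 'a \<Rightarrow> real) \<Rightarrow> ('a \<Rightarrow> real) \<Rightarrow> bool" where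
  "modified_H_type br g \<phi> \<longleftrightarrow>
     two_step_nilpotent_lie br \<and> inner_prod g \<and> nondegenerate_on g (center br) \<and>
     quadratic_form_on (center br) \<phi> \<and>
     (\<forall>z\<in>center br. \<forall>x\<in>orth_compl g (center br). jmap br g z (jmap br g z x) = - \<phi> z *\<^sub>R x)"

definition polar :: "('a::euclidean_space \<Rightarrow> real) \<Rightarrow> 'a \<Rightarrow> 'a \<Rightarrow> real" where
  "polar \<phi> z z' = (\<phi> (z + z') - \<phi> z - \<phi> z') / 2"

definition Id_dagger :: "('a::euclidean_space \<Rightarrow> 'a \<Rightarrow> 'a) \<Rightarrow> ('a \<Rightarrow> 'a \<Rightarrow> real) \<Rightarrow> ('a \<Rightarrow> real) \<Rightarrow> 'a \<Rightarrow> 'a" where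
  "Id_dagger br g \<phi> z = (THE w. w \<in> center br \<and> (\<forall>z'\<in>center br. g w z' = polar \<phi> z z'))"

definition pseudo_orthonormal_basis :: "('a::euclidean_space \<Rightarrow> 'a \<Rightarrow> real) \<Rightarrow> 'a set \<Rightarrow> 'a set \<Rightarrow> bool" where
  "pseudo_orthonormal_basis g S B \<longleftrightarrow> B \<subseteq> S \<and> independent B \<and> span B = span S \<and>
     (\<forall>u\<in>B. g u u = 1 \<or> g u u = -1) \<and> (\<forall>u\<in>B. \<forall>u'\<in>B. u \<noteq> u' \<longrightarrow> g u u' = 0)"

text \<open>Levi-Civita connection of the left-invariant metric (Koszul formula):
  2 g(nabla_x y, u) = g([x,y],u) - g([y,u],x) + g([u,x],y).\<close>
definition lc_conn :: "('a::euclidean_space \<Rightarrow> 'a \<Rightarrow> 'a) \<Rightarrow> ('a \<Rightarrow> 'a \<Rightarrow> real) \<Rightarrow> 'a \<Rightarrow> 'a \<Rightarrow> 'a" where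
  "lc_conn br g x y = (THE w. \<forall>u. 2 * g w u = g (br x y) u - g (br y u) x + g (br u x) y)"

definition curv :: "('a::euclidean_space \<Rightarrow> 'a \<Rightarrow> 'a) \<Rightarrow> ('a \<Rightarrow> 'a \<Rightarrow> real) \<Rightarrow> 'a \<Rightarrow> 'a \<Rightarrow> 'a \<Rightarrow> 'a" where
  "curv br g x y w = lc_conn br g x (lc_conn br g y w) - lc_conn br g y (lc_conn br g x w)
      - lc_conn br g (br x y) w"

definition lin_trace :: "('a::euclidean_space \<Rightarrow> 'a) \<Rightarrow> real" where
  "lin_trace f = (\<Sum>e\<in>Basis. inner (f e) e)"

definition ricci :: "('a::euclidean_space \<Rightarrow> 'a \<Rightarrow> 'a) \<Rightarrow> ('a \<Rightarrow> 'a \<Rightarrow> real) \<Rightarrow> 'a \<Rightarrow> 'a \<Rightarrow> real" where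
  "ricci br g x y = lin_trace (\<lambda>w. curv br g w x y)"

definition ricci_op :: "('a::euclidean_space \<Rightarrow> 'a \<Rightarrow> 'a) \<Rightarrow> ('a \<Rightarrow> 'a \<Rightarrow> real) \<Rightarrow> 'a \<Rightarrow> 'a" where
  "ricci_op br g x = (THE w. \<forall>y. g w y = ricci br g x y)"

end

theory Submission
  imports Defs
begin


locale mh =
  fixes br :: "'a::euclidean_space \<Rightarrow> 'a \<Rightarrow> 'a" and g :: "'a \<Rightarrow> 'a \<Rightarrow> real"
    and \<phi> :: "'a \<Rightarrow> real" and B :: "'a \<Rightarrow> 'a \<Rightarrow> real" and Zb :: "'a set"
  assumes brl: "bilinear br" and brskew: "\<And>x y. br x y = - br y x"
    and nil: "\<And>x y w. br (br x y) w = 0"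
    and gl: "bilinear g" and gsym: "\<And>x y. g x y = g y x"
    and gnd: "\<And>x. (\<And>y. g x y = 0) \<Longrightarrow> x = 0"
    and znd: "\<And>x. x \<in> center br \<Longrightarrow> (\<And>y. y \<in> center br \<Longrightarrow> g x y = 0) \<Longrightarrow> x = 0"
    and Bl: "bilinear B" and Bsym: "\<And>x y. B x y = B y x"
    and phiB: "\<And>z. z \<in> center br \<Longrightarrow> \<phi> z = B z z"
    and jsq: "\<And>z x. z \<in> center br \<Longrightarrow> x \<in> orth_compl g (center br) \<Longrightarrow>
                 jmap br g z (jmap br g z x) = - \<phi> z *\<^sub>R x"
    and ZbZ: "Zb \<subseteq> center br" and Zbind: "independent Zb"
    and Zbspan: "span Zb = span (center br)"
    and Zbn: "\<And>u. u \<in> Zb \<Longrightarrow> g u u = 1 \<or> g u u = -1"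
    and Zbo: "\<And>u u'. u \<in> Zb \<Longrightarrow> u' \<in> Zb \<Longrightarrow> u \<noteq> u' \<Longrightarrow> g u u' = 0"
begin

abbreviation "Z \<equiv> center br"
abbreviation "V \<equiv> orth_compl g Z"
abbreviation "J \<equiv> jmap br g"

lemmas brs = bilinear_ladd[OF brl] bilinear_radd[OF brl] bilinear_lmul[OF brl] bilinear_rmul[OF brl]
  bilinear_lneg[OF brl] bilinear_rneg[OF brl] bilinear_lsub[OF brl] bilinear_rsub[OF brl]
  bilinear_lzero[OF brl] bilinear_rzero[OF brl]
lemmas gs = bilinear_ladd[OF gl] bilinear_radd[OF gl] bilinear_lmul[OF gl] bilinear_rmul[OF gl]
  bilinear_lneg[OF gl] bilinear_rneg[OF gl] bilinear_lsub[OF gl] bilinear_rsub[OF gl]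
  bilinear_lzero[OF gl] bilinear_rzero[OF gl]
lemmas Bs = bilinear_ladd[OF Bl] bilinear_radd[OF Bl] bilinear_lmul[OF Bl] bilinear_rmul[OF Bl]
  bilinear_lneg[OF Bl] bilinear_rneg[OF Bl] bilinear_lsub[OF Bl] bilinear_rsub[OF Bl]
  bilinear_lzero[OF Bl] bilinear_rzero[OF Bl]

lemma g_suml: "g (sum f S) y = (\<Sum>i\<in>S. g (f i) y)"
proof -
  have "linear (\<lambda>x. g x y)" using gl unfolding bilinear_def by blast
  from linear_sum[OF this] show ?thesis by simp
qed
lemma g_sumr: "g y (sum f S) = (\<Sum>i\<in>S. g y (f i))"
proof -
  have "linear (\<lambda>x. g y x)" using gl unfolding bilinear_def by blast
  from linear_sum[OF this] show ?thesis by simp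
qed
lemma B_suml: "B (sum f S) y = (\<Sum>i\<in>S. B (f i) y)"
proof -
  have "linear (\<lambda>x. B x y)" using Bl unfolding bilinear_def by blast
  from linear_sum[OF this] show ?thesis by simp
qed
lemma B_sumr: "B y (sum f S) = (\<Sum>i\<in>S. B y (f i))"
proof -
  have "linear (\<lambda>x. B y x)" using Bl unfolding bilinear_def by blast
  from linear_sum[OF this] show ?thesis by simp
qed
lemma br_suml: "br (sum f S) y = (\<Sum>i\<in>S. br (f i) y)"
proof -
  have "linear (\<lambda>x. br x y)" using brl unfolding bilinear_def by blast
  from linear_sum[OF this] show ?thesis by simp
qed
lemma br_sumr: "br y (sum f S) = (\<Sum>i\<in>S. br y (f i))"
proof -
  have "linear (\<lambda>x. br y x)" using brl unfolding bilinear_def by blast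
  from linear_sum[OF this] show ?thesis by simp
qed
lemma subspace_Z: "subspace Z"
  unfolding subspace_def center_def by (auto simp: brs)
lemma subspace_V: "subspace V"
  unfolding subspace_def orth_compl_def by (auto simp: gs)
lemma span_Z: "span Z = Z" using subspace_Z by (simp add: span_eq_iff)
lemma inZ_iff: "x \<in> Z \<longleftrightarrow> x \<in> span Zb" using Zbspan span_Z by simp
lemma fin_Zb: "finite Zb" using Zbind finiteI_independent by blast
lemma eps2: "u \<in> Zb \<Longrightarrow> g u u * g u u = 1" using Zbn by force
lemma Zb_Z: "u \<in> Zb \<Longrightarrow> u \<in> Z" using ZbZ by blast

lemma br_Z[simp]: "br x y \<in> Z" unfolding center_def using nil by simp
lemma brZl: "z \<in> Z \<Longrightarrow> br z y = 0" unfolding center_def by simp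
lemma brZr: "z \<in> Z \<Longrightarrow> br y z = 0" using brskew brZl by (metis neg_equal_0_iff_equal)
lemma gVZ: "v \<in> V \<Longrightarrow> z \<in> Z \<Longrightarrow> g v z = 0" unfolding orth_compl_def by simp
lemma gZV: "v \<in> V \<Longrightarrow> z \<in> Z \<Longrightarrow> g z v = 0" using gVZ gsym by metis

definition PZ :: "'a \<Rightarrow> 'a" where "PZ x = (\<Sum>k\<in>Zb. (g k k * g x k) *\<^sub>R k)"
definition PV :: "'a \<Rightarrow> 'a" where "PV x = x - PZ x"

lemma PZ_in[simp]: "PZ x \<in> Z"
  unfolding PZ_def inZ_iff by (intro span_sum span_scale span_base) auto

lemma g_PZ_k: assumes "k \<in> Zb" shows "g (PZ x) k = g x k"
proof -
  have "g (PZ x) k = (\<Sum>j\<in>Zb. g j j * g x j * g j k)"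
    unfolding PZ_def g_suml by (simp add: gs)
  also have "\<dots> = g k k * g x k * g k k + (\<Sum>j\<in>Zb-{k}. g j j * g x j * g j k)"
    using fin_Zb assms by (simp add: sum.remove)
  also have "(\<Sum>j\<in>Zb-{k}. g j j * g x j * g j k) = 0"
    using Zbo assms by (intro sum.neutral) auto
  finally show ?thesis using eps2[OF assms] by (simp add: algebra_simps)
qed

lemma PV_in[simp]: "PV x \<in> V"
proof -
  have "\<forall>s\<in>Z. g (PV x) s = 0"
  proof
    fix s assume "s \<in> Z"
    hence "s \<in> span Zb" using inZ_iff by simp
    thus "g (PV x) s = 0"
    proof (rule span_induct[where P="\<lambda>s. g (PV x) s = 0"])
      show "subspace {s. g (PV x) s = 0}" unfolding subspace_def by (auto simp: gs)
    next
      fix k assume "k \<in> Zb" thus "g (PV x) k = 0" unfolding PV_def by (simp add: gs g_PZ_k)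
    qed
  qed
  thus ?thesis unfolding orth_compl_def by simp
qed

lemma PZ_PV: "PZ x + PV x = x" unfolding PV_def by simp

lemma PZ_Z: assumes "z \<in> Z" shows "PZ z = z"
proof -
  have "PV z \<in> Z" unfolding PV_def using assms subspace_Z PZ_in by (simp add: subspace_diff)
  hence "PV z = 0" using znd gVZ[OF PV_in] by blast
  thus ?thesis unfolding PV_def by simp
qed

lemma PZ_V: assumes "v \<in> V" shows "PZ v = 0"
  unfolding PZ_def using gVZ[OF assms] Zb_Z by (intro sum.neutral) auto

lemma PV_V: "v \<in> V \<Longrightarrow> PV v = v" unfolding PV_def using PZ_V by simp
lemma PV_Z: "z \<in> Z \<Longrightarrow> PV z = 0" unfolding PV_def using PZ_Z by simp

lemma linear_PZ: "linear PZ"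
  by (rule linearI) (simp_all add: PZ_def gs algebra_simps scaleR_sum_right sum.distrib scaleR_add_left)
lemma linear_PV: "linear PV"
  by (rule linearI) (simp_all add: PV_def linear_add[OF linear_PZ] linear_scale[OF linear_PZ] scaleR_diff_right)

lemma g_PV_l: "g (PV x) y = g (PV x) (PV y)"
proof -
  have "g (PV x) y = g (PV x) (PZ y) + g (PV x) (PV y)" using PZ_PV[of y] gs by metis
  thus ?thesis using gVZ[OF PV_in PZ_in] by simp
qed
lemma g_PV_r: "g x (PV y) = g (PV x) (PV y)" using g_PV_l gsym by metis

lemma Vnd: assumes "v \<in> V" "\<And>u. u \<in> V \<Longrightarrow> g v u = 0" shows "v = 0"
proof (rule gnd)
  fix y
  have "g v y = g v (PZ y) + g v (PV y)" using PZ_PV[of y] gs by metis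
  moreover have "g v (PZ y) = 0" using gVZ[OF assms(1) PZ_in] .
  moreover have "g v (PV y) = 0" using assms(2)[OF PV_in] .
  ultimately show "g v y = 0" by simp
qed

lemma basis_coef: fixes c :: "'a \<Rightarrow> real"
  assumes "e \<in> Basis" shows "inner (\<Sum>e'\<in>Basis. c e' *\<^sub>R e') e = c e"
proof -
  have "inner (\<Sum>e'\<in>Basis. c e' *\<^sub>R e') e = (\<Sum>e'\<in>Basis. c e' * inner e' e)" by (simp add: inner_sum_left)
  also have "\<dots> = (\<Sum>e'\<in>Basis. if e' = e then c e else 0)"
    by (rule sum.cong) (auto simp: inner_Basis assms)
  finally show ?thesis using assms by simp
qed

lemma riesz: assumes "linear l" shows "\<exists>d. \<forall>u. g u d = l u"
proof -
  define G where "G d = (\<Sum>e\<in>Basis. g e d *\<^sub>R e)" for d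
  have lin: "linear G" unfolding G_def
    by (rule linearI) (simp_all add: gs algebra_simps scaleR_sum_right sum.distrib scaleR_add_left)
  have gexp: "g u d = (\<Sum>e\<in>Basis. inner u e * g e d)" for u d
  proof -
    have "g u d = g (\<Sum>e\<in>Basis. inner u e *\<^sub>R e) d" by (simp add: euclidean_representation)
    thus ?thesis by (simp add: g_suml gs)
  qed
  have "inj G"
  proof (rule linear_inj_on_iff_eq_0[THEN iffD2, OF lin, of UNIV, simplified], intro allI impI)
    fix d assume "G d = 0"
    hence "inner (G d) e = 0" if "e \<in> Basis" for e by simp
    hence "g e d = 0" if "e \<in> Basis" for e using that basis_coef[OF that, of "\<lambda>e. g e d"] unfolding G_def
      by simp
    hence "g u d = 0" for u using gexp[of u d] by simp
    thus "d = 0" using gnd gsym by metis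
  qed
  hence "surj G" using linear_injective_imp_surjective lin by blast
  then obtain d where d: "G d = (\<Sum>e\<in>Basis. l e *\<^sub>R e)" by (metis surjD)
  have "g e d = l e" if "e \<in> Basis" for e
  proof -
    have "inner (G d) e = l e" unfolding d using basis_coef[OF that, of l] .
    thus ?thesis using basis_coef[OF that, of "\<lambda>e. g e d"] unfolding G_def by simp
  qed
  hence "g u d = l u" for u
  proof -
    have "l u = l (\<Sum>e\<in>Basis. inner u e *\<^sub>R e)" by (simp add: euclidean_representation)
    also have "\<dots> = (\<Sum>e\<in>Basis. inner u e * l e)" using assms by (simp add: linear_sum linear_scale)
    finally show ?thesis using gexp[of u d] \<open>\<And>e. e \<in> Basis \<Longrightarrow> g e d = l e\<close> by simp
  qed
  thus ?thesis by blast
qed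

end


context mh begin

lemma lin_gbr: "linear (\<lambda>u. g (br x u) z)"
  by (rule linearI) (simp_all add: brs gs)

lemma J_char: "J z x \<in> V \<and> (\<forall>y\<in>V. g (br x y) z = g y (J z x))"
proof -
  obtain d where d: "\<And>u. g u d = g (br x u) z" using riesz[OF lin_gbr[of x z]] by blast
  have ex: "\<exists>!w. w \<in> V \<and> (\<forall>y\<in>V. g (br x y) z = g y w)"
  proof
    show "PV d \<in> V \<and> (\<forall>y\<in>V. g (br x y) z = g y (PV d))"
    proof (intro conjI ballI)
      fix y assume y: "y \<in> V"
      have "g y d = g y (PZ d) + g y (PV d)" using PZ_PV[of d] gs by metis
      thus "g (br x y) z = g y (PV d)" using gVZ[OF y PZ_in] d by simp
    qed simp
  next
    fix w assume w: "w \<in> V \<and> (\<forall>y\<in>V. g (br x y) z = g y w)"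
    have p: "\<forall>y\<in>V. g (br x y) z = g y (PV d)"
    proof
      fix y assume y: "y \<in> V"
      have "g y d = g y (PZ d) + g y (PV d)" using PZ_PV[of d] gs by metis
      thus "g (br x y) z = g y (PV d)" using gVZ[OF y PZ_in] d by simp
    qed
    have "w - PV d = 0"
    proof (rule Vnd)
      show "w - PV d \<in> V" using w subspace_V PV_in by (simp add: subspace_diff)
      fix u assume "u \<in> V"
      thus "g (w - PV d) u = 0" using w p by (simp add: gs gsym[of w u] gsym[of "PV d" u])
    qed
    thus "w = PV d" by simp
  qed
  show ?thesis unfolding jmap_def by (rule theI'[OF ex])
qed

lemma J_in[simp]: "J z x \<in> V" using J_char by blast

lemma JK: "g u (J z x) = g (br x u) z"
proof -
  have "g u (J z x) = g (PZ u) (J z x) + g (PV u) (J z x)" using PZ_PV[of u] gs by metis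
  also have "g (PZ u) (J z x) = 0" using gZV[OF J_in PZ_in] .
  also have "g (PV u) (J z x) = g (br x (PV u)) z" using J_char PV_in by metis
  also have "br x (PV u) = br x u" unfolding PV_def by (simp add: brs brZr)
  finally show ?thesis by simp
qed

lemma J_eqI: assumes "\<And>u. g u w = g (br x u) z" shows "J z x = w"
proof -
  have "J z x - w = 0"
    by (rule gnd) (simp add: gs gsym[of _ y for y] JK assms gsym[of w])
  thus ?thesis by simp
qed

lemma Jbil: "bilinear J"
  unfolding bilinear_def
proof (intro conjI allI)
  fix z show "linear (\<lambda>x. J z x)"
    by (rule linearI; rule J_eqI) (simp_all add: gs brs JK)
next
  fix x show "linear (\<lambda>z. J z x)"
    by (rule linearI; rule J_eqI) (simp_all add: gs brs JK)
qed

lemmas Js = bilinear_ladd[OF Jbil] bilinear_radd[OF Jbil] bilinear_lmul[OF Jbil] bilinear_rmul[OF Jbil]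
  bilinear_lneg[OF Jbil] bilinear_rneg[OF Jbil] bilinear_lsub[OF Jbil] bilinear_rsub[OF Jbil]
  bilinear_lzero[OF Jbil] bilinear_rzero[OF Jbil]

lemma J_suml: "J (sum f S) y = (\<Sum>i\<in>S. J (f i) y)"
proof -
  have "linear (\<lambda>x. J x y)" using Jbil unfolding bilinear_def by blast
  from linear_sum[OF this] show ?thesis by simp
qed

lemma J_Zr: "x \<in> Z \<Longrightarrow> J z x = 0" by (rule J_eqI) (simp add: brZl gs)
lemma J_Vl: "z \<in> V \<Longrightarrow> J z x = 0" by (rule J_eqI) (simp add: gs gZV)
lemma br_br2[simp]: "br a (br b c) = 0" by (simp add: brZr)
lemma J_br[simp]: "J z (br a b) = 0" by (simp add: J_Zr)
lemma J_J[simp]: "J (J z x) y = 0" by (simp add: J_Vl)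

lemma J_skew: "g (J z x) u = - g x (J z u)"
proof -
  have "g (J z x) u = g (br x u) z" using JK gsym by metis
  also have "\<dots> = - g (br u x) z" using brskew[of x u] by (simp add: gs)
  also have "\<dots> = - g x (J z u)" using JK by simp
  finally show ?thesis .
qed

lemma J_PZ: "J (PZ a) u = J a u"
proof -
  have "J a u = J (PZ a) u + J (PV a) u" using PZ_PV[of a] Js by metis
  thus ?thesis using J_Vl[OF PV_in] by simp
qed

lemma J_exp: "J a u = (\<Sum>k\<in>Zb. (g k k * g a k) *\<^sub>R J k u)"
  using J_PZ[of a u] unfolding PZ_def J_suml by (simp add: Js)

lemma br_exp: "br a b = (\<Sum>k\<in>Zb. (g k k * g (br a b) k) *\<^sub>R k)"
  using PZ_Z[OF br_Z, of a b] unfolding PZ_def by simp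

lemma J_PV: "J z (PV x) = J z x"
proof -
  have "J z x = J z (PZ x) + J z (PV x)" using PZ_PV[of x] Js by metis
  thus ?thesis using J_Zr[OF PZ_in] by simp
qed

lemma jsq': "z \<in> Z \<Longrightarrow> J z (J z x) = - \<phi> z *\<^sub>R PV x"
  using jsq[of z "PV x"] J_PV[of z x] by simp

lemma jpol: assumes "z \<in> Z" "z' \<in> Z"
  shows "J z (J z' x) + J z' (J z x) = - (2 * B z z') *\<^sub>R PV x"
proof -
  have zz: "z + z' \<in> Z" using assms subspace_Z by (simp add: subspace_add)
  have "J (z + z') (J (z + z') x) = J z (J z x) + J z (J z' x) + J z' (J z x) + J z' (J z' x)"
    by (simp add: Js)
  also have "\<dots> = - \<phi> z *\<^sub>R PV x - \<phi> z' *\<^sub>R PV x + (J z (J z' x) + J z' (J z x))"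
    using jsq'[OF assms(1)] jsq'[OF assms(2)] by simp
  finally have "J z (J z' x) + J z' (J z x) = - \<phi> (z + z') *\<^sub>R PV x + \<phi> z *\<^sub>R PV x + \<phi> z' *\<^sub>R PV x"
    using jsq'[OF zz] by (simp add: algebra_simps)
  also have "\<phi> (z + z') = \<phi> z + \<phi> z' + 2 * B z z'"
    using phiB[OF zz] phiB[OF assms(1)] phiB[OF assms(2)] by (simp add: Bs Bsym[of z' z])
  finally show ?thesis by (simp add: algebra_simps)
qed

definition D :: "'a \<Rightarrow> 'a \<Rightarrow> 'a" where
  "D a b = (1/2) *\<^sub>R br a b - (1/2) *\<^sub>R J b a - (1/2) *\<^sub>R J a b"

lemma lc: "lc_conn br g a b = D a b"
  unfolding lc_conn_def
proof (rule the_equality)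
  have e1: "g (J b a) u = g (br a u) b" for u using JK gsym by metis
  have e2: "g (J a b) u = g (br b u) a" for u using JK gsym by metis
  show "\<forall>u. 2 * g (D a b) u = g (br a b) u - g (br b u) a + g (br u a) b"
  proof
    fix u
    have "br u a = - br a u" by (rule brskew)
    thus "2 * g (D a b) u = g (br a b) u - g (br b u) a + g (br u a) b"
      unfolding D_def by (simp add: gs e1 e2 algebra_simps)
  qed
  fix w assume w: "\<forall>u. 2 * g w u = g (br a b) u - g (br b u) a + g (br u a) b"
  have "w - D a b = 0"
  proof (rule gnd)
    fix y
    have "2 * g (D a b) y = 2 * g w y" using w \<open>\<forall>u. 2 * g (D a b) u = _\<close> by simp
    thus "g (w - D a b) y = 0" by (simp add: gs)
  qed
  thus "w = D a b" by simp
qed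

lemma DD: "D a (D b c) = - (1/4) *\<^sub>R br a (J c b) - (1/4) *\<^sub>R br a (J b c) - (1/4) *\<^sub>R J (br b c) a
   + (1/4) *\<^sub>R J a (J c b) + (1/4) *\<^sub>R J a (J b c)"
  unfolding D_def by (simp add: brs Js nil algebra_simps)

lemma Dbr: "D (br a b) c = - (1/2) *\<^sub>R J (br a b) c"
  unfolding D_def by (simp add: nil)

lemma curv_exp: "curv br g a b c =
   - (1/4) *\<^sub>R br a (J c b) - (1/4) *\<^sub>R br a (J b c) - (1/4) *\<^sub>R J (br b c) a
   + (1/4) *\<^sub>R J a (J c b) + (1/4) *\<^sub>R J a (J b c)
   + (1/4) *\<^sub>R br b (J c a) + (1/4) *\<^sub>R br b (J a c) + (1/4) *\<^sub>R J (br a c) b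
   - (1/4) *\<^sub>R J b (J c a) - (1/4) *\<^sub>R J b (J a c) + (1/2) *\<^sub>R J (br a b) c"
  unfolding curv_def lc DD Dbr by (simp add: algebra_simps)

end



lemma lt_add: "lin_trace (\<lambda>a. f a + h a) = lin_trace f + lin_trace h"
  unfolding lin_trace_def by (simp add: inner_add_left sum.distrib)
lemma lt_diff: "lin_trace (\<lambda>a. f a - h a) = lin_trace f - lin_trace h"
  unfolding lin_trace_def by (simp add: inner_diff_left sum_subtractf)
lemma lt_scale: "lin_trace (\<lambda>a. c *\<^sub>R f a) = c * lin_trace f"
  unfolding lin_trace_def by (simp add: sum_distrib_left)
lemma lt_neg: "lin_trace (\<lambda>a. - f a) = - lin_trace f"
  unfolding lin_trace_def by (simp add: sum_negf)

lemma lt_rank: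
  assumes "finite K" "\<And>k. k \<in> K \<Longrightarrow> linear (l k)"
  shows "lin_trace (\<lambda>a. \<Sum>k\<in>K. l k a *\<^sub>R u k) = (\<Sum>k\<in>K. l k (u k))"
proof -
  have "lin_trace (\<lambda>a. \<Sum>k\<in>K. l k a *\<^sub>R u k) = (\<Sum>e\<in>Basis. \<Sum>k\<in>K. l k e * inner (u k) e)"
    unfolding lin_trace_def by (simp add: inner_sum_left)
  also have "\<dots> = (\<Sum>k\<in>K. \<Sum>e\<in>Basis. inner (u k) e * l k e)"
    by (subst sum.swap) (simp add: mult.commute)
  also have "\<dots> = (\<Sum>k\<in>K. l k (u k))"
  proof (rule sum.cong[OF refl])
    fix k assume k: "k \<in> K"
    have "l k (u k) = l k (\<Sum>e\<in>Basis. inner (u k) e *\<^sub>R e)" by (simp add: euclidean_representation)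
    also have "\<dots> = (\<Sum>e\<in>Basis. inner (u k) e * l k e)"
      using assms(2)[OF k] by (simp add: linear_sum linear_scale)
    finally show "(\<Sum>e\<in>Basis. inner (u k) e * l k e) = l k (u k)" by simp
  qed
  finally show ?thesis .
qed

lemma lt_id: "lin_trace (\<lambda>a::'a::euclidean_space. a) = real DIM('a)"
  unfolding lin_trace_def by simp

context mh begin

lemma lin_gk: "linear f \<Longrightarrow> linear (\<lambda>a. c * g (f a) k)"
  by (rule linearI) (simp_all add: linear_add linear_scale gs algebra_simps)

lemma lin_brl: "linear (\<lambda>a. br a u)" using brl unfolding bilinear_def by blast
lemma lin_brr: "linear (\<lambda>a. br u a)" using brl unfolding bilinear_def by blast
lemma lin_Jl: "linear (\<lambda>a. J a u)" using Jbil unfolding bilinear_def by blast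
lemma lin_Jr: "linear (\<lambda>a. J u a)" using Jbil unfolding bilinear_def by blast

lemma lt_Zval: assumes "linear f" "\<And>a. f a \<in> Z"
  shows "lin_trace f = (\<Sum>k\<in>Zb. g k k * g (f k) k)"
proof -
  have "lin_trace f = lin_trace (\<lambda>a. \<Sum>k\<in>Zb. (g k k * g (f a) k) *\<^sub>R k)"
    using PZ_Z[OF assms(2)] unfolding PZ_def by (simp add: fun_eq_iff)
  also have "\<dots> = (\<Sum>k\<in>Zb. g k k * g (f k) k)"
    by (rule lt_rank[OF fin_Zb lin_gk[OF assms(1)]])
  finally show ?thesis .
qed

lemma lt_J1: assumes "linear f" "linear h"
  shows "lin_trace (\<lambda>a. h (J (f a) u)) = (\<Sum>k\<in>Zb. g k k * g (f (h (J k u))) k)"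
proof -
  have "h (J (f a) u) = (\<Sum>k\<in>Zb. (g k k * g (f a) k) *\<^sub>R h (J k u))" for a
    using J_exp[of "f a" u] assms(2) by (simp add: linear_sum linear_scale)
  hence "lin_trace (\<lambda>a. h (J (f a) u)) = lin_trace (\<lambda>a. \<Sum>k\<in>Zb. (g k k * g (f a) k) *\<^sub>R h (J k u))"
    by simp
  also have "\<dots> = (\<Sum>k\<in>Zb. g k k * g (f (h (J k u))) k)"
    using lt_rank[OF fin_Zb, of "\<lambda>k a. g k k * g (f a) k" "\<lambda>k. h (J k u)"] lin_gk[OF assms(1)] by simp
  finally show ?thesis .
qed

lemma lt_adj: assumes "linear f" "linear h" "\<And>x y. g (f x) y = g x (h y)"
  shows "lin_trace f = lin_trace h"
proof -
  have "\<forall>e. \<exists>d. \<forall>u. g u d = inner u e"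
  proof
    fix e :: 'a
    have "linear (\<lambda>u. inner u e)" by (rule linearI) (simp_all add: inner_add_left)
    from riesz[OF this] show "\<exists>d. \<forall>u. g u d = inner u e" .
  qed
  then obtain d where d: "\<And>e u. g u (d e) = inner u e" by metis
  have dsym: "inner (d e) e' = inner (d e') e" for e e'
    using d[of "d e" e'] d[of "d e'" e] gsym[of "d e" "d e'"] by simp
  have "lin_trace f = (\<Sum>e\<in>Basis. g (f e) (d e))" unfolding lin_trace_def using d by simp
  also have "\<dots> = (\<Sum>e\<in>Basis. g e (h (d e)))" using assms(3) by simp
  also have "\<dots> = (\<Sum>e\<in>Basis. \<Sum>e'\<in>Basis. inner (d e) e' * g e (h e'))"
  proof (rule sum.cong[OF refl])
    fix e
    have "h (d e) = h (\<Sum>e'\<in>Basis. inner (d e) e' *\<^sub>R e')" by (simp add: euclidean_representation)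
    also have "\<dots> = (\<Sum>e'\<in>Basis. inner (d e) e' *\<^sub>R h e')" using assms(2) by (simp add: linear_sum linear_scale)
    finally show "g e (h (d e)) = (\<Sum>e'\<in>Basis. inner (d e) e' * g e (h e'))" by (simp add: g_sumr gs)
  qed
  also have "\<dots> = (\<Sum>e'\<in>Basis. \<Sum>e\<in>Basis. inner (d e') e * g (h e') e)"
  proof -
    have pw: "inner (d e) e' * g e (h e') = inner (d e') e * g (h e') e" for e e'
      using dsym[of e e'] gsym[of e "h e'"] by simp
    show ?thesis by (subst sum.swap) (simp add: pw)
  qed
  also have "\<dots> = (\<Sum>e'\<in>Basis. g (h e') (d e'))"
  proof (rule sum.cong[OF refl])
    fix e'
    have "g (h e') (d e') = g (h e') (\<Sum>e\<in>Basis. inner (d e') e *\<^sub>R e)" by (simp add: euclidean_representation)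
    thus "(\<Sum>e\<in>Basis. inner (d e') e * g (h e') e) = g (h e') (d e')" by (simp add: g_sumr gs mult.commute)
  qed
  also have "\<dots> = lin_trace h" unfolding lin_trace_def using d by simp
  finally show ?thesis .
qed

lemma dimV: "dim V = DIM('a) - card Zb"
proof -
  have s: "{x + y |x y. x \<in> Z \<and> y \<in> V} = UNIV"
  proof (rule set_eqI, rule iffI)
    fix a :: 'a
    have "a = PZ a + PV a \<and> PZ a \<in> Z \<and> PV a \<in> V" using PZ_PV[of a] by simp
    thus "a \<in> {x + y |x y. x \<in> Z \<and> y \<in> V}" by blast
  qed simp
  have i: "Z \<inter> V = {0}"
  proof
    show "Z \<inter> V \<subseteq> {0}"
    proof
      fix x assume x: "x \<in> Z \<inter> V"
      hence "x = 0" using znd[of x] gVZ[of x] by blast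
      thus "x \<in> {0}" by simp
    qed
    show "{0} \<subseteq> Z \<inter> V" using subspace_Z subspace_V by (simp add: subspace_0)
  qed
  have "dim Z = card Zb" using dim_span[of Z] Zbspan dim_span_eq_card_independent[OF Zbind] by simp
  moreover have "dim (UNIV::'a set) + dim (Z \<inter> V) = dim Z + dim V"
    using dim_sums_Int[OF subspace_Z subspace_V] s by simp
  moreover have "dim ({0}::'a set) = 0" by (simp add: dim_eq_0)
  ultimately show ?thesis using i by simp
qed

lemma lt_PV: "lin_trace PV = real (dim V)"
proof -
  have "lin_trace PZ = lin_trace (\<lambda>a. \<Sum>k\<in>Zb. (g k k * g a k) *\<^sub>R k)" unfolding PZ_def by simp
  also have "\<dots> = (\<Sum>k\<in>Zb. g k k * g k k)"
    using lt_rank[OF fin_Zb, of "\<lambda>k a. g k k * g a k" "\<lambda>k. k"] lin_gk[OF linear_id] by (simp add: id_def)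
  also have "\<dots> = real (card Zb)" using eps2 by simp
  finally have pz: "lin_trace PZ = real (card Zb)" .
  have "lin_trace PV = lin_trace (\<lambda>a. a - PZ a)" unfolding PV_def by simp
  also have "\<dots> = real DIM('a) - real (card Zb)" using lt_diff[of "\<lambda>a. a" PZ] lt_id pz by simp
  also have "card Zb \<le> DIM('a)"
    using independent_bound_general[OF Zbind] dim_subset_UNIV[of Zb] by (simp add: dim_UNIV)
  hence "real DIM('a) - real (card Zb) = real (dim V)" using dimV by simp
  finally show ?thesis .
qed

end


context mh begin

definition xi where "xi = (\<Sum>u\<in>Zb. g u u * \<phi> u)"

lemma T3: "lin_trace (\<lambda>a. J w a) = 0"
proof -
  have "lin_trace (\<lambda>a. J w a) = lin_trace (\<lambda>a. - J w a)"
    by (rule lt_adj) (auto intro!: linearI simp: Js J_skew gs)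
  thus ?thesis using lt_neg[of "\<lambda>a. J w a"] by simp
qed

lemma T7: "lin_trace (\<lambda>a. J b (J c a)) = - real (dim V) * B (PZ b) (PZ c)"
proof -
  define zb where "zb = PZ b"
  define zc where "zc = PZ c"
  have zZ: "zb \<in> Z" "zc \<in> Z" unfolding zb_def zc_def by simp_all
  have e: "J b (J c a) = J zb (J zc a)" for a unfolding zb_def zc_def J_PZ ..
  have t: "lin_trace (\<lambda>a. J zb (J zc a)) = lin_trace (\<lambda>a. J zc (J zb a))"
  proof (rule lt_adj)
    show "linear (\<lambda>a. J zb (J zc a))" by (rule linearI) (simp_all add: Js)
    show "linear (\<lambda>a. J zc (J zb a))" by (rule linearI) (simp_all add: Js)
    fix x y
    show "g (J zb (J zc x)) y = g x (J zc (J zb y))" using J_skew by simp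
  qed
  have "lin_trace (\<lambda>a. J zb (J zc a)) + lin_trace (\<lambda>a. J zc (J zb a))
      = lin_trace (\<lambda>a. J zb (J zc a) + J zc (J zb a))" by (simp add: lt_add)
  also have "\<dots> = lin_trace (\<lambda>a. (- (2 * B zb zc)) *\<^sub>R PV a)" using jpol[OF zZ] by simp
  also have "\<dots> = - (2 * B zb zc) * real (dim V)" by (subst lt_scale) (simp add: lt_PV)
  finally show ?thesis unfolding e using t zb_def zc_def by simp
qed

lemma T1: "lin_trace (\<lambda>a. br a u) = 0"
  using lt_Zval[OF lin_brl] brZl[OF Zb_Z] by (simp add: gs)

lemma T4: "lin_trace (\<lambda>a. br b (J c a)) = 0"
proof -
  have "linear (\<lambda>a. br b (J c a))" by (rule linearI) (simp_all add: Js brs)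
  from lt_Zval[OF this] show ?thesis using J_Zr[OF Zb_Z] by (simp add: brs gs)
qed

lemma T2: "lin_trace (\<lambda>a. J a u) = 0"
  using lt_J1[of "\<lambda>a. a" "\<lambda>a. a" u] linear_id gVZ[OF J_in Zb_Z] by (simp add: id_def)

lemma T8: "lin_trace (\<lambda>a. J b (J a c)) = 0"
  using lt_J1[of "\<lambda>a. a" "J b" c] linear_id lin_Jr gVZ[OF J_in Zb_Z] by (simp add: id_def)

lemma T5: "lin_trace (\<lambda>a. br b (J a c)) = xi * g c (PV b)"
proof -
  have "lin_trace (\<lambda>a. br b (J a c)) = (\<Sum>k\<in>Zb. g k k * g (br b (J k c)) k)"
    using lt_J1[of "\<lambda>a. a" "br b" c] linear_id lin_brr by (simp add: id_def)
  also have "\<dots> = (\<Sum>k\<in>Zb. g k k * \<phi> k * g c (PV b))"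
  proof (rule sum.cong[OF refl])
    fix k assume k: "k \<in> Zb"
    have "g (br b (J k c)) k = g (J k c) (J k b)" using JK by simp
    also have "\<dots> = - g c (J k (J k b))" by (rule J_skew)
    also have "\<dots> = \<phi> k * g c (PV b)" using jsq'[OF Zb_Z[OF k]] by (simp add: gs)
    finally show "g k k * g (br b (J k c)) k = g k k * \<phi> k * g c (PV b)" by simp
  qed
  finally show ?thesis unfolding xi_def by (simp add: sum_distrib_right)
qed

lemma T6: "lin_trace (\<lambda>a. J (br a c) b) = - xi * g c (PV b)"
proof -
  have "lin_trace (\<lambda>a. J (br a c) b) = (\<Sum>k\<in>Zb. g k k * g (br (J k b) c) k)"
    using lt_J1[of "\<lambda>a. br a c" "\<lambda>a. a" b] linear_id lin_brl by (simp add: id_def)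
  also have "\<dots> = (\<Sum>k\<in>Zb. - (g k k * \<phi> k * g c (PV b)))"
  proof (rule sum.cong[OF refl])
    fix k assume k: "k \<in> Zb"
    have "g (br (J k b) c) k = g c (J k (J k b))" using JK by simp
    also have "\<dots> = - \<phi> k * g c (PV b)" using jsq'[OF Zb_Z[OF k]] by (simp add: gs)
    finally show "g k k * g (br (J k b) c) k = - (g k k * \<phi> k * g c (PV b))" by simp
  qed
  finally show ?thesis unfolding xi_def by (simp add: sum_distrib_right sum_negf)
qed

lemma ricci_formula: "ricci br g b c = - (xi / 2) * g b (PV c) + (real (dim V) / 4) * B (PZ b) (PZ c)"
proof -
  have "ricci br g b c = lin_trace (\<lambda>a.
   - (1/4) *\<^sub>R br a (J c b) - (1/4) *\<^sub>R br a (J b c) - (1/4) *\<^sub>R J (br b c) a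
   + (1/4) *\<^sub>R J a (J c b) + (1/4) *\<^sub>R J a (J b c)
   + (1/4) *\<^sub>R br b (J c a) + (1/4) *\<^sub>R br b (J a c) + (1/4) *\<^sub>R J (br a c) b
   - (1/4) *\<^sub>R J b (J c a) - (1/4) *\<^sub>R J b (J a c) + (1/2) *\<^sub>R J (br a b) c)"
    unfolding ricci_def curv_exp ..
  also have "\<dots> = - (1/4) * lin_trace (\<lambda>a. br a (J c b)) - (1/4) * lin_trace (\<lambda>a. br a (J b c))
     - (1/4) * lin_trace (\<lambda>a. J (br b c) a)
   + (1/4) * lin_trace (\<lambda>a. J a (J c b)) + (1/4) * lin_trace (\<lambda>a. J a (J b c))
   + (1/4) * lin_trace (\<lambda>a. br b (J c a)) + (1/4) * lin_trace (\<lambda>a. br b (J a c))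
   + (1/4) * lin_trace (\<lambda>a. J (br a c) b)
   - (1/4) * lin_trace (\<lambda>a. J b (J c a)) - (1/4) * lin_trace (\<lambda>a. J b (J a c))
   + (1/2) * lin_trace (\<lambda>a. J (br a b) c)"
    by (simp only: lt_add lt_diff lt_scale)
  also have "\<dots> = (1/4) * (xi * g c (PV b)) + (1/4) * (- xi * g c (PV b))
     - (1/4) * (- real (dim V) * B (PZ b) (PZ c)) + (1/2) * (- xi * g b (PV c))"
    by (simp only: T1 T2 T3 T4 T5 T6 T7 T8 T6[of b c])
  finally show ?thesis by (simp add: algebra_simps)
qed

lemma g_PV: "g (PV x) y = g x (PV y)" using g_PV_l g_PV_r by metis

definition IdF where "IdF z = (\<Sum>k\<in>Zb. (g k k * B z k) *\<^sub>R k)"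

lemma IdF_in: "IdF z \<in> Z"
  unfolding IdF_def inZ_iff by (intro span_sum span_scale span_base) auto

lemma g_IdF: "g (IdF z) y = B z (PZ y)"
  unfolding IdF_def PZ_def g_suml B_sumr by (simp add: gs Bs gsym[of _ y] algebra_simps)

lemma IdF_0: "IdF 0 = 0" unfolding IdF_def by (simp add: Bs)

lemma ricci_op_formula:
  "ricci_op br g b = - (xi / 2) *\<^sub>R PV b + (real (dim V) / 4) *\<^sub>R IdF (PZ b)"
  unfolding ricci_op_def
proof (rule the_equality)
  show "\<forall>y. g (- (xi / 2) *\<^sub>R PV b + (real (dim V) / 4) *\<^sub>R IdF (PZ b)) y = ricci br g b y"
    by (simp add: ricci_formula gs g_IdF g_PV[of b])
  fix w assume w: "\<forall>y. g w y = ricci br g b y"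
  have "w - (- (xi / 2) *\<^sub>R PV b + (real (dim V) / 4) *\<^sub>R IdF (PZ b)) = 0"
  proof (rule gnd)
    fix y show "g (w - (- (xi / 2) *\<^sub>R PV b + (real (dim V) / 4) *\<^sub>R IdF (PZ b))) y = 0"
      using w by (simp add: ricci_formula gs g_IdF g_PV[of b])
  qed
  thus "w = - (xi / 2) *\<^sub>R PV b + (real (dim V) / 4) *\<^sub>R IdF (PZ b)" by simp
qed

lemma Idd: assumes "z \<in> Z" shows "Id_dagger br g \<phi> z = IdF z"
  unfolding Id_dagger_def
proof (rule the_equality)
  have pol: "polar \<phi> z z' = B z z'" if "z' \<in> Z" for z'
  proof -
    have "z + z' \<in> Z" using assms that subspace_Z by (simp add: subspace_add)
    thus ?thesis unfolding polar_def using phiB assms that by (simp add: Bs Bsym[of z' z])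
  qed
  show "IdF z \<in> Z \<and> (\<forall>z'\<in>Z. g (IdF z) z' = polar \<phi> z z')"
    using IdF_in pol g_IdF PZ_Z by simp
  fix w assume w: "w \<in> Z \<and> (\<forall>z'\<in>Z. g w z' = polar \<phi> z z')"
  have "w - IdF z = 0"
  proof (rule znd)
    show "w - IdF z \<in> Z" using w IdF_in subspace_Z by (simp add: subspace_diff)
    fix y assume "y \<in> Z"
    thus "g (w - IdF z) y = 0" using w pol g_IdF PZ_Z by (simp add: gs)
  qed
  thus "w = IdF z" by simp
qed

lemma main:
  "(\<forall>z\<in>Z. ricci_op br g z \<in> Z)
   \<and> (\<forall>x\<in>V. ricci_op br g x \<in> V)
   \<and> (\<forall>x\<in>V. ricci_op br g x = - ((\<Sum>u\<in>Zb. g u u * \<phi> u) / 2) *\<^sub>R x)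
   \<and> (\<forall>z\<in>Z. ricci_op br g z = (real (dim V) / 4) *\<^sub>R Id_dagger br g \<phi> z)"
proof -
  have rz: "ricci_op br g z = (real (dim V) / 4) *\<^sub>R IdF z" if "z \<in> Z" for z
    using that by (simp add: ricci_op_formula PZ_Z PV_Z)
  have rv: "ricci_op br g x = - (xi / 2) *\<^sub>R x" if "x \<in> V" for x
    using that by (simp add: ricci_op_formula PZ_V PV_V IdF_0)
  show ?thesis
    using rz rv Idd IdF_in subspace_Z subspace_V
    by (auto simp: xi_def subspace_scale subspace_neg)
qed

end

theorem theorem3p5:
  fixes br :: "'a::euclidean_space \<Rightarrow> 'a \<Rightarrow> 'a"
    and g :: "'a \<Rightarrow> 'a \<Rightarrow> real"
    and \<phi> :: "'a \<Rightarrow> real"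
    and Zb :: "'a set"
  assumes "modified_H_type br g \<phi>"
    and "pseudo_orthonormal_basis g (center br) Zb"
  shows "(\<forall>z\<in>center br. ricci_op br g z \<in> center br)
       \<and> (\<forall>x\<in>orth_compl g (center br). ricci_op br g x \<in> orth_compl g (center br))
       \<and> (\<forall>x\<in>orth_compl g (center br).
            ricci_op br g x = - ((\<Sum>u\<in>Zb. g u u * \<phi> u) / 2) *\<^sub>R x)
       \<and> (\<forall>z\<in>center br.
            ricci_op br g z = (real (dim (orth_compl g (center br))) / 4) *\<^sub>R Id_dagger br g \<phi> z)"
proof -
  from assms(1) have tl: "two_step_nilpotent_lie br" and ip: "inner_prod g"
    and nd: "nondegenerate_on g (center br)" and qf: "quadratic_form_on (center br) \<phi>"
    and js: "\<forall>z\<in>center br. \<forall>x\<in>orth_compl g (center br). jmap br g z (jmap br g z x) = - \<phi> z *\<^sub>R x"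
    unfolding modified_H_type_def by blast+
  from qf obtain B where Bl: "bilinear B" and Bsym: "\<forall>x y. B x y = B y x"
    and phiB: "\<forall>z\<in>center br. \<phi> z = B z z"
    unfolding quadratic_form_on_def by blast
  from tl have brl: "bilinear br" and sk: "\<forall>x y. br x y = - br y x"
    and nl: "\<forall>x y w. br (br x y) w = 0" unfolding two_step_nilpotent_lie_def by blast+
  from ip have gl: "bilinear g" and gsym: "\<forall>x y. g x y = g y x"
    and gnd: "\<forall>x. (\<forall>y. g x y = 0) \<longrightarrow> x = 0" unfolding inner_prod_def by blast+
  from nd have znd: "\<forall>x\<in>center br. (\<forall>y\<in>center br. g x y = 0) \<longrightarrow> x = 0"
    unfolding nondegenerate_on_def by blast
  from assms(2) have z1: "Zb \<subseteq> center br" and z2: "independent Zb" and z3: "span Zb = span (center br)"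
    and z4: "\<forall>u\<in>Zb. g u u = 1 \<or> g u u = -1" and z5: "\<forall>u\<in>Zb. \<forall>u'\<in>Zb. u \<noteq> u' \<longrightarrow> g u u' = 0"
    unfolding pseudo_orthonormal_basis_def by blast+
  interpret mh br g \<phi> B Zb
    by (unfold_locales; (rule brl gl Bl z1 z2 z3)?; (use sk nl gsym gnd znd Bsym phiB js z4 z5 in blast)?)
  show ?thesis using main .
qed


end
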